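(* Let \[ A^0_1=\begin{pmatrix}-4&0\\-6&0\end{pmatrix},\ A^0_2=\begin{pmatrix}-2&-15\\-3&-15\end{pmatrix},\ A^0_3=\begin{pmatrix}2&-1\\-3&-5\end{pmatrix},\ A^0_4=\begin{pmatrix}2&8\\0&7\end{pmatrix},\ A^0_5=\begin{pmatrix}0&0\\2&1\end{pmatrix}, \] \[ B^0_1=\begin{pmatrix}138&0\\328&0\end{pmatrix},\ B^0_2=\begin{pmatrix}69&495\\164&-246\end{pmatrix},\ B^0_3=\begin{pmatrix}1685&1781\\1476&1230\end{pmatrix},\ B^0_4=\begin{pmatrix}188&-571\\492&246\end{pmatrix},\ B^0_5=\begin{pmatrix}-378&-189\\-492&-246\end{pmatrix}, \] and $X^0_j=\begin{bmatrix}A^0_j\\ B^0_j\end{bmatrix}\in\mathbb M^{4\times 2}$. Then there is $\epsilon_0>0$ such that for every $\epsilon\in(0,\epsilon_0)$ there exists a smooth convex function $G\colon\mathbb M^{2\times 2}\times\mathbb R\to\mathbb R$ such that the (smooth, strongly polyconvex) function $F_0(A)=\frac{\epsilon}{2}|A|^2+G(A,\det A)$ satisfies $X^0_j\in K_{F_0}$, i.e. $B^0_j=DF_0(A^0_j)J$, for $j=1,\dots,5$.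
   Context: $\mathbb M^{m\times n}$ is the space of real $m\times n$ matrices, $|\cdot|$ the Frobenius norm, $J=\begin{pmatrix}0&-1\\1&0\end{pmatrix}$. For $F\colon\mathbb M^{2\times 2}\to\mathbb R$ of class $C^1$, $K_F=\left\{\begin{bmatrix}A\\ DF(A)J\end{bmatrix}: A\in\mathbb M^{2\times 2}\right\}\subset\mathbb M^{4\times 2}$, where $\begin{bmatrix}A\\ B\end{bmatrix}$ denotes the $4\times 2$ matrix with upper $2\times 2$ block $A$ and lower block $B$. *)

theory Defs
  imports "HOL-Analysis.Analysis"
begin

text \<open>2x2 real matrices are rendered as real^2^2 (rows indexed first).
  The Euclidean norm on real^2^2 is the Frobenius norm, and the inner
  product is the Frobenius inner product.\<close>

definition mat2 :: "real \<Rightarrow> real \<Rightarrow> real \<Rightarrow> real \<Rightarrow> real^2^2" where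
  "mat2 a b c d = vector [vector [a, b], vector [c, d]]"

definition Jmat :: "real^2^2" where
  "Jmat = mat2 0 (-1) 1 0"

definition DF :: "(real^2^2 \<Rightarrow> real) \<Rightarrow> real^2^2 \<Rightarrow> real^2^2" where
  "DF F A = (THE M. (F has_derivative (\<lambda>H. M \<bullet> H)) (at A))"

definition stack :: "real^2^2 \<Rightarrow> real^2^2 \<Rightarrow> real^2^4" where
  "stack A B = (\<chi> i. if i = 1 then A$1 else if i = 2 then A$2
                     else if i = 3 then B$1 else B$2)"

definition KF :: "(real^2^2 \<Rightarrow> real) \<Rightarrow> (real^2^4) set" where
  "KF F = {stack A (DF F A ** Jmat) | A. True}"

fun iter_dderiv :: "('a::real_normed_vector \<Rightarrow> real) \<Rightarrow> 'a list \<Rightarrow> ('a \<Rightarrow> real)" where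
  "iter_dderiv f [] = f"
| "iter_dderiv f (v # vs) = iter_dderiv (\<lambda>x. frechet_derivative f (at x) v) vs"

definition smooth :: "('a::euclidean_space \<Rightarrow> real) \<Rightarrow> bool" where
  "smooth f \<longleftrightarrow> (\<forall>vs x. iter_dderiv f vs differentiable (at x))"

definition A0 :: "nat \<Rightarrow> real^2^2" where
  "A0 j = (if j = 1 then mat2 (-4) 0 (-6) 0
      else if j = 2 then mat2 (-2) (-15) (-3) (-15)
      else if j = 3 then mat2 2 (-1) (-3) (-5)
      else if j = 4 then mat2 2 8 0 7
      else mat2 0 0 2 1)"

definition B0 :: "nat \<Rightarrow> real^2^2" where
  "B0 j = (if j = 1 then mat2 138 0 328 0
      else if j = 2 then mat2 69 495 164 (-246)
      else if j = 3 then mat2 1685 1781 1476 1230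
      else if j = 4 then mat2 188 (-571) 492 246
      else mat2 (-378) (-189) (-492) (-246))"

definition X0 :: "nat \<Rightarrow> real^2^4" where
  "X0 j = stack (A0 j) (B0 j)"

end

theory Submission
  imports Defs "HOL-Computational_Algebra.Polynomial"
begin


fun Pn :: "nat \<Rightarrow> real poly" where
  "Pn 0 = [:1,1:]"
| "Pn (Suc n) = [:0,0,1:] * (Pn n - pderiv (Pn n))"

fun Hf :: "nat \<Rightarrow> real \<Rightarrow> real" where
  "Hf 0 u = (if u \<le> 0 then 0 else u * exp (-1/u))"
| "Hf (Suc n) u = (if u \<le> 0 then 0 else poly (Pn n) (1/u) * exp (-1/u))"

lemma poly_exp_lim: "((\<lambda>w. poly p w * exp (-w)) \<longlongrightarrow> (0::real)) at_top"
proof -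
  have "((\<lambda>w. \<Sum>i\<le>degree p. coeff p i * (w ^ i / exp w)) \<longlongrightarrow> (\<Sum>i\<le>degree p. coeff p i * 0)) at_top"
    by (intro tendsto_sum tendsto_mult tendsto_const tendsto_power_div_exp_0)
  moreover have "poly p w * exp (-w) = (\<Sum>i\<le>degree p. coeff p i * (w ^ i / exp w))" for w
    by (simp add: poly_altdef exp_minus sum_distrib_right divide_inverse mult.assoc)
  ultimately show ?thesis by simp
qed

lemma flat_right: "((\<lambda>u. poly p (1/u) * exp (-1/u)) \<longlongrightarrow> (0::real)) (at_right 0)"
proof -
  have "filterlim (\<lambda>u::real. inverse u) at_top (at_right 0)"
    by (rule filterlim_inverse_at_top_right)
  from filterlim_compose[OF poly_exp_lim this]
  show ?thesis by (simp add: inverse_eq_divide)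
qed

lemma d0: "u > 0 \<Longrightarrow> ((\<lambda>u. u * exp (-1/u)) has_real_derivative poly (Pn 0) (1/u) * exp (-1/u)) (at u)"
  apply (rule DERIV_cong)
   apply (auto intro!: derivative_eq_intros)
  apply (simp add: field_simps power2_eq_square)
  done
lemma d1: "u > 0 \<Longrightarrow> ((\<lambda>u. poly (Pn m) (1/u) * exp (-1/u)) has_real_derivative poly (Pn (Suc m)) (1/u) * exp (-1/u)) (at u)"
  apply (rule DERIV_cong)
   apply (auto intro!: derivative_eq_intros)
  apply (simp add: field_simps power2_eq_square)
  done

lemma Hf_quot_right: "\<exists>q. \<forall>h>0. Hf n h / h = poly q (1/h) * exp (-1/h)"
proof (cases n)
  case 0
  show ?thesis by (rule exI[of _ "[:1:]"]) (simp add: 0)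
next
  case (Suc m)
  show ?thesis by (rule exI[of _ "[:0,1:] * Pn m"]) (simp add: Suc field_simps)
qed

lemma Hf_deriv0: "(Hf n has_real_derivative 0) (at 0)"
proof -
  obtain q where q: "\<forall>h>0. Hf n h / h = poly q (1/h) * exp (-1/h)"
    using Hf_quot_right by blast
  have r: "((\<lambda>h. Hf n h / h) \<longlongrightarrow> 0) (at_right 0)"
  proof (rule Lim_transform_eventually[OF flat_right[of q]])
    show "\<forall>\<^sub>F x in at_right 0. poly q (1 / x) * exp (- 1 / x) = Hf n x / x"
      using q eventually_at_right_less[of 0] by (auto elim!: eventually_mono)
  qed
  have l: "((\<lambda>h. Hf n h / h) \<longlongrightarrow> 0) (at_left 0)"
  proof (rule Lim_transform_eventually[OF tendsto_const[of 0]])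
    have "\<forall>\<^sub>F x in at_left (0::real). x < 0"
      using eventually_at_left_real[of "-1" 0] by (auto elim!: eventually_mono)
    then show "\<forall>\<^sub>F x in at_left 0. 0 = Hf n x / x"
      by (elim eventually_mono) (cases n, auto)
  qed
  have z: "Hf n 0 = 0" by (cases n) auto
  show ?thesis unfolding DERIV_def
    using filterlim_split_at[OF l r] z by simp
qed

lemma Hf_deriv: "(Hf n has_real_derivative Hf (Suc n) u) (at u)"
proof -
  consider "u > 0" | "u < 0" | "u = 0" by linarith
  then show ?thesis
  proof cases
    case 1
    have e: "Hf (Suc n) u = poly (Pn n) (1/u) * exp (-1/u)" using 1 by simp
    show ?thesis
    proof (cases n)
      case 0
      have "(Hf 0 has_real_derivative poly (Pn 0) (1/u) * exp (-1/u)) (at u)"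
        by (rule has_field_derivative_transform_within_open[OF d0[OF 1], where S="{0<..}"])
           (use 1 in auto)
      then show ?thesis using e 0 by simp
    next
      case (Suc m)
      have "(Hf (Suc m) has_real_derivative poly (Pn (Suc m)) (1/u) * exp (-1/u)) (at u)"
        by (rule has_field_derivative_transform_within_open[OF d1[OF 1], where S="{0<..}"])
           (use 1 in auto)
      then show ?thesis using e Suc by simp
    qed
  next
    case 2
    have "((\<lambda>x. 0) has_real_derivative 0) (at u)" by simp
    have z: "\<forall>x<0. Hf n x = 0" by (cases n) auto
    from \<open>((\<lambda>x. 0) has_real_derivative 0) (at u)\<close>
    have "(Hf n has_real_derivative 0) (at u)"
      by (rule has_field_derivative_transform_within_open[where S="{..<0}"])
         (use 2 z in auto)
    then show ?thesis using 2 by simp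
  next
    case 3
    then show ?thesis using Hf_deriv0[of n] by simp
  qed
qed

lemma Hf2_nonneg: "Hf 2 u \<ge> 0"
  by (simp add: numeral_2_eq_2 pderiv_pCons)

lemma Hf1_mono: "x \<le> y \<Longrightarrow> Hf (Suc 0) x \<le> Hf (Suc 0) y"
  apply (rule DERIV_nonneg_imp_nondecreasing[of x y "Hf (Suc 0)"])
   apply assumption
  using Hf_deriv[of "Suc 0"] Hf2_nonneg[unfolded numeral_2_eq_2] by blast

lemma Hf0_convex: "convex_on UNIV (Hf 0)"
  apply (rule convex_on_realI[where f'="Hf (Suc 0)"])
    apply simp
   apply (rule Hf_deriv)
  apply (erule Hf1_mono)
  done



declare Hf.simps[simp del]

inductive SM :: "('a::real_inner \<Rightarrow> real) \<Rightarrow> bool" where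
  SM_const: "SM (\<lambda>x. c)"
| SM_lin: "bounded_linear f \<Longrightarrow> SM f"
| SM_quad: "bounded_linear (L::'a \<Rightarrow> 'a) \<Longrightarrow> SM (\<lambda>x. c * (L x \<bullet> L x))"
| SM_H: "SM (\<lambda>x. c * Hf n (a \<bullet> x - t))"
| SM_add: "SM f \<Longrightarrow> SM g \<Longrightarrow> SM (\<lambda>x. f x + g x)"

lemma Hf_chain: "((\<lambda>x. Hf n (a \<bullet> x - t)) has_derivative (\<lambda>h. Hf (Suc n) (a \<bullet> x - t) * (a \<bullet> h))) (at x)"
proof -
  have i: "((\<lambda>x. a \<bullet> x - t) has_derivative (\<lambda>h. a \<bullet> h)) (at x)"
    by (auto intro!: derivative_eq_intros)
  have o: "(Hf n has_derivative (\<lambda>h. Hf (Suc n) (a \<bullet> x - t) * h)) (at (a \<bullet> x - t))"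
    using Hf_deriv[of n "a \<bullet> x - t"] by (simp add: has_field_derivative_def)
  from has_derivative_compose[OF i o] show ?thesis by (simp add: o_def)
qed

lemma SM_deriv:
  assumes "SM f"
  shows "\<exists>f'. (\<forall>x. (f has_derivative f' x) (at x)) \<and> (\<forall>v. SM (\<lambda>x. f' x v))"
  using assms
proof induction
  case (SM_const c)
  show ?case by (rule exI[of _ "\<lambda>x h. 0"]) (auto intro: SM.SM_const)
next
  case (SM_lin f)
  show ?case
    by (rule exI[of _ "\<lambda>x. f"]) (auto intro: SM.SM_const bounded_linear_imp_has_derivative[OF SM_lin])
next
  case (SM_quad L c)
  interpret L: bounded_linear L by fact
  have d: "((\<lambda>x. c * (L x \<bullet> L x)) has_derivative (\<lambda>h. c * (L h \<bullet> L x + L x \<bullet> L h))) (at x)" for x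
    by (auto intro!: derivative_eq_intros L.has_derivative)
  have b: "bounded_linear (\<lambda>x. c * (L v \<bullet> L x + L x \<bullet> L v))" for v
    by (auto intro!: bounded_linear_intros SM_quad)
  show ?case
    by (rule exI[of _ "\<lambda>x h. c * (L h \<bullet> L x + L x \<bullet> L h)"]) (auto intro: d SM.SM_lin b)
next
  case (SM_H c n a t)
  have d: "((\<lambda>x. c * Hf n (a \<bullet> x - t)) has_derivative (\<lambda>h. c * (Hf (Suc n) (a \<bullet> x - t) * (a \<bullet> h)))) (at x)" for x
    by (auto intro!: derivative_eq_intros Hf_chain)
  have s: "SM (\<lambda>x. c * (Hf (Suc n) (a \<bullet> x - t) * (a \<bullet> v)))" for v
    using SM.SM_H[of "c * (a \<bullet> v)" "Suc n" a t] by (simp add: algebra_simps)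
  show ?case
    by (rule exI[of _ "\<lambda>x h. c * (Hf (Suc n) (a \<bullet> x - t) * (a \<bullet> h))"]) (auto intro: d s)
next
  case (SM_add f g)
  then obtain f' g' where f: "\<forall>x. (f has_derivative f' x) (at x)" "\<forall>v. SM (\<lambda>x. f' x v)"
    and g: "\<forall>x. (g has_derivative g' x) (at x)" "\<forall>v. SM (\<lambda>x. g' x v)" by blast
  show ?case
    by (rule exI[of _ "\<lambda>x h. f' x h + g' x h"]) (use f g in \<open>auto intro!: has_derivative_add SM.SM_add\<close>)
qed

lemma SM_smooth:
  fixes f :: "'a::euclidean_space \<Rightarrow> real"
  assumes "SM f" shows "smooth f"
proof -
  have "\<forall>x. iter_dderiv f vs differentiable (at x)" if "SM f" for vs and f :: "'a \<Rightarrow> real"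
    using that
  proof (induction vs arbitrary: f)
    case Nil
    then show ?case using SM_deriv[OF Nil] by (auto simp: differentiable_def)
  next
    case (Cons v vs)
    obtain f' where f': "\<forall>x. (f has_derivative f' x) (at x)" "\<forall>v. SM (\<lambda>x. f' x v)"
      using SM_deriv[OF Cons.prems] by blast
    have "(\<lambda>x. frechet_derivative f (at x) v) = (\<lambda>x. f' x v)"
      using f'(1) frechet_derivative_at by metis
    then show ?case using Cons.IH f'(2) by simp
  qed
  then show ?thesis using assms unfolding smooth_def by blast
qed

lemma SM_sum: "finite S \<Longrightarrow> (\<And>i. i \<in> S \<Longrightarrow> SM (f i)) \<Longrightarrow> SM (\<lambda>x. \<Sum>i\<in>S. f i x)"
proof (induction S rule: finite_induct)
  case empty
  then show ?case using SM_const[of 0] by simp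
next
  case (insert a F)
  then show ?case using SM_add[of "f a" "\<lambda>x. \<Sum>i\<in>F. f i x"] by simp
qed



lemma mat2_nth [simp]:
  "mat2 a b c d $ 1 $ 1 = a" "mat2 a b c d $ 1 $ 2 = b"
  "mat2 a b c d $ 2 $ 1 = c" "mat2 a b c d $ 2 $ 2 = d"
  by (simp_all add: mat2_def)

lemma mat2_eta: "A = mat2 (A$1$1) (A$1$2) (A$2$1) (A$2$2)"
  by (simp add: vec_eq_iff forall_2)

lemma mat2_eq_iff: "mat2 a b c d = mat2 a' b' c' d' \<longleftrightarrow> a = a' \<and> b = b' \<and> c = c' \<and> d = d'"
  by (auto simp: vec_eq_iff forall_2)

lemma inner_m2: "(A::real^2^2) \<bullet> H = A$1$1 * H$1$1 + A$1$2 * H$1$2 + A$2$1 * H$2$1 + A$2$2 * H$2$2"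
  by (simp add: inner_vec_def sum_2)

lemma inner_mat2 [simp]: "mat2 a b c d \<bullet> mat2 a' b' c' d' = a*a' + b*b' + c*c' + d*d'"
  by (simp add: inner_m2)

lemma det_mat2 [simp]: "det (mat2 a b c d) = a*d - b*c"
  by (simp add: det_2)

lemma mat2_add [simp]: "mat2 a b c d + mat2 a' b' c' d' = mat2 (a+a') (b+b') (c+c') (d+d')"
  by (simp add: vec_eq_iff forall_2)

lemma mat2_scaleR [simp]: "r *\<^sub>R mat2 a b c d = mat2 (r*a) (r*b) (r*c) (r*d)"
  by (simp add: vec_eq_iff forall_2)

lemma mat2_mult [simp]: "mat2 a b c d ** mat2 a' b' c' d' = mat2 (a*a'+b*c') (a*b'+b*d') (c*a'+d*c') (c*b'+d*d')"
  by (simp add: vec_eq_iff forall_2 matrix_matrix_mult_def sum_2)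

definition cofm :: "real^2^2 \<Rightarrow> real^2^2" where
  "cofm A = mat2 (A$2$2) (-(A$2$1)) (-(A$1$2)) (A$1$1)"

lemma cofm_mat2 [simp]: "cofm (mat2 a b c d) = mat2 d (-c) (-b) a"
  by (simp add: cofm_def)

lemma nth_has_derivative: "((\<lambda>A::real^2^2. A$i$k) has_derivative (\<lambda>H. H$i$k)) (at A)"
  by (rule bounded_linear_imp_has_derivative)
     (rule bounded_linear_compose[OF bounded_linear_vec_nth bounded_linear_vec_nth])

lemma det_deriv: "((\<lambda>A::real^2^2. det A) has_derivative (\<lambda>H. cofm A \<bullet> H)) (at A)"
proof -
  have e: "(\<lambda>A::real^2^2. det A) = (\<lambda>A. A$1$1 * A$2$2 - A$1$2 * A$2$1)"
    by (simp add: det_2)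
  have "((\<lambda>A::real^2^2. A$1$1 * A$2$2 - A$1$2 * A$2$1) has_derivative
     (\<lambda>H. (A$1$1 * H$2$2 + H$1$1 * A$2$2) - (A$1$2 * H$2$1 + H$1$2 * A$2$1))) (at A)"
    by (intro has_derivative_diff has_derivative_mult nth_has_derivative)
  then show ?thesis unfolding e
    by (rule has_derivative_eq_rhs) (auto simp: fun_eq_iff cofm_def inner_m2 algebra_simps)
qed

lemma DF_eq:
  assumes "(F has_derivative (\<lambda>H. M \<bullet> H)) (at A)"
  shows "DF F A = M"
  unfolding DF_def
proof (rule the_equality)
  fix M' assume "(F has_derivative (\<lambda>H. M' \<bullet> H)) (at A)"
  from has_derivative_unique[OF this assms]
  have "M' \<bullet> (M' - M) = M \<bullet> (M' - M)" by meson
  then have "(M' - M) \<bullet> (M' - M) = 0" by (simp add: inner_diff_left)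
  then show "M' = M" by simp
qed (rule assms)

lemma Hf_comp:
  assumes "(g has_derivative g') (at x)"
  shows "((\<lambda>x. Hf n (g x)) has_derivative (\<lambda>h. Hf (Suc n) (g x) * g' h)) (at x)"
proof -
  have o: "(Hf n has_derivative (\<lambda>h. Hf (Suc n) (g x) * h)) (at (g x))"
    using Hf_deriv[of n "g x"] by (simp add: has_field_derivative_def)
  from has_derivative_compose[OF assms o] show ?thesis by (simp add: o_def)
qed

lemma convex_quad:
  assumes "linear L" "c \<ge> 0"
  shows "convex_on UNIV (\<lambda>x. c * (L x \<bullet> L x))"
proof (rule convex_onI)
  fix t :: real and x y assume t: "0 < t" "t < 1"
  interpret L: linear L by fact
  define a where "a = L x"
  define b where "b = L y"
  have Lz: "L ((1 - t) *\<^sub>R x + t *\<^sub>R y) = (1 - t) *\<^sub>R a + t *\<^sub>R b"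
    by (simp add: L.add L.scale a_def b_def)
  have zz: "((1 - t) *\<^sub>R a + t *\<^sub>R b) \<bullet> ((1 - t) *\<^sub>R a + t *\<^sub>R b)
      = (1-t)*(1-t) * (a \<bullet> a) + 2*t*(1-t) * (a \<bullet> b) + t*t * (b \<bullet> b)"
    by (simp add: inner_add_left inner_add_right inner_commute[of b a] algebra_simps)
  have dd: "(a - b) \<bullet> (a - b) = a \<bullet> a - 2 * (a \<bullet> b) + b \<bullet> b"
    by (simp add: inner_diff_left inner_diff_right inner_commute[of b a])
  have nn: "c * (t * (1 - t) * ((a - b) \<bullet> (a - b))) \<ge> 0"
    using t assms(2) by simp
  have id: "(1 - t) * (c * (a \<bullet> a)) + t * (c * (b \<bullet> b)) - c * ((1-t)*(1-t) * (a \<bullet> a) + 2*t*(1-t) * (a \<bullet> b) + t*t * (b \<bullet> b))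
       = c * (t * (1 - t) * (a \<bullet> a - 2 * (a \<bullet> b) + b \<bullet> b))"
    by (simp add: algebra_simps)
  show "c * (L ((1 - t) *\<^sub>R x + t *\<^sub>R y) \<bullet> L ((1 - t) *\<^sub>R x + t *\<^sub>R y))
      \<le> (1 - t) * (c * (L x \<bullet> L x)) + t * (c * (L y \<bullet> L y))"
    unfolding Lz zz a_def[symmetric] b_def[symmetric] using nn[unfolded dd] id by linarith
qed simp

lemma convex_lin: "convex_on UNIV (\<lambda>x. b \<bullet> x)"
  by (rule convex_onI) (auto simp: inner_add_right)

lemma convex_H:
  assumes "c \<ge> 0"
  shows "convex_on UNIV (\<lambda>x. c * Hf 0 (a \<bullet> x - t))"
proof -
  have "convex_on UNIV (\<lambda>x. Hf 0 (a \<bullet> x - t))"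
  proof (rule convex_onI)
    fix s :: real and x y assume "0 < s" "s < 1"
    have e: "a \<bullet> ((1 - s) *\<^sub>R x + s *\<^sub>R y) - t = (1 - s) * (a \<bullet> x - t) + s * (a \<bullet> y - t)"
      by (simp add: inner_add_right algebra_simps)
    show "Hf 0 (a \<bullet> ((1 - s) *\<^sub>R x + s *\<^sub>R y) - t) \<le> (1 - s) * Hf 0 (a \<bullet> x - t) + s * Hf 0 (a \<bullet> y - t)"
      unfolding e using convex_onD[OF Hf0_convex, of s "a \<bullet> x - t" "a \<bullet> y - t"] \<open>0 < s\<close> \<open>s < 1\<close>
      by simp
  qed simp
  then show ?thesis using assms by (rule convex_on_cmul[rotated])
qed

lemma convex_sum_fin: "finite S \<Longrightarrow> (\<And>i. i \<in> S \<Longrightarrow> convex_on UNIV (f i)) \<Longrightarrow> convex_on UNIV (\<lambda>x. \<Sum>i\<in>S. f i x)"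
proof (induction S rule: finite_induct)
  case empty
  then show ?case by (simp add: convex_on_const)
next
  case (insert a F)
  then show ?case using convex_on_add[of UNIV "f a" "\<lambda>x. \<Sum>i\<in>F. f i x"] by simp
qed



definition dl :: real where "dl = 1/100"
definition bA :: "real^2^2" where "bA = mat2 (667/4) (-70) (-19/2) (-1)"
definition bt :: real where "bt = 335"
definition wA :: "nat \<Rightarrow> real^2^2" where
  "wA j = (if j = 1 then mat2 (-16671/100) (-319/2) (239/25) 574
      else if j = 2 then mat2 (-77423/100) (3233/20) (36803/100) (3003/20)
      else if j = 3 then mat2 (190973/100) (-55949/100) (-199197/100) (-1319/20)
      else if j = 4 then mat2 (349/50) (6448/25) (435/2) (37943/100)
      else mat2 (-709/2) (891/2) (6387/25) (-49101/100))"
definition wt :: "nat \<Rightarrow> real" where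
  "wt j = (if j = 1 then -1095/4 else if j = 2 then -685/2 else if j = 3 then 873/2
      else if j = 4 then -1113/4 else 167/4)"
definition tt :: "nat \<Rightarrow> real" where
  "tt j = (if j = 1 then 15212/25 else if j = 2 then 90387/100 else if j = 3 then 500911/100
      else if j = 4 then 83683/100 else 379/20)"
definition cc :: real where "cc = 1 / Hf (Suc 0) 1"
definition Lf :: "(real^2^2) \<times> real \<Rightarrow> (real^2^2) \<times> real" where "Lf x = (fst x, 0)"
definition Gf :: "real \<Rightarrow> (real^2^2) \<times> real \<Rightarrow> real" where
  "Gf e x = (dl - e) / 2 * (Lf x \<bullet> Lf x) + (bA, bt) \<bullet> x
     + (\<Sum>j\<in>{1..5}. cc * Hf 0 ((wA j, wt j) \<bullet> x - tt j))"
definition uu :: "nat \<Rightarrow> real^2^2 \<Rightarrow> real" where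
  "uu j A = wA j \<bullet> A + wt j * det A - tt j"
definition gradF :: "real^2^2 \<Rightarrow> real^2^2" where
  "gradF A = dl *\<^sub>R A + bA + bt *\<^sub>R cofm A
     + (\<Sum>j\<in>{1..5}. (cc * Hf (Suc 0) (uu j A)) *\<^sub>R (wA j + wt j *\<^sub>R cofm A))"

lemma Hf1_1: "Hf (Suc 0) 1 = 2 * exp (-1)"
  by (simp add: Hf.simps)

lemma cc_pos: "cc > 0"
  by (simp add: cc_def Hf1_1)

lemma cc_Hf1: "cc * Hf (Suc 0) 1 = 1"
  by (simp add: cc_def Hf1_1)

lemma Hf_nonpos: "x \<le> 0 \<Longrightarrow> Hf n x = 0"
  by (cases n) (simp_all add: Hf.simps)

lemma bl_Lf: "bounded_linear Lf"
  unfolding Lf_def by (intro bounded_linear_Pair bounded_linear_fst bounded_linear_zero)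

lemma SM_Gf: "SM (Gf e)"
proof -
  have "SM (\<lambda>x. (dl - e) / 2 * (Lf x \<bullet> Lf x) + (bA, bt) \<bullet> x
     + (\<Sum>j\<in>{1..5}. cc * Hf 0 ((wA j, wt j) \<bullet> x - tt j)))"
    by (intro SM_add SM_quad bl_Lf SM_lin bounded_linear_inner_right SM_sum finite_atLeastAtMost SM_H)
  then show ?thesis by (simp add: Gf_def[abs_def])
qed

lemma convex_Gf: "e \<le> dl \<Longrightarrow> convex_on UNIV (Gf e)"
proof -
  assume "e \<le> dl"
  then have "convex_on UNIV (\<lambda>x. (dl - e) / 2 * (Lf x \<bullet> Lf x) + (bA, bt) \<bullet> x
     + (\<Sum>j\<in>{1..5}. cc * Hf 0 ((wA j, wt j) \<bullet> x - tt j)))"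
    using cc_pos bl_Lf
    by (intro convex_on_add convex_quad convex_lin convex_sum_fin finite_atLeastAtMost convex_H)
       (auto simp: bounded_linear.linear)
  then show ?thesis by (simp add: Gf_def[abs_def])
qed

lemma F_deriv:
  "((\<lambda>A. e / 2 * (norm A)\<^sup>2 + Gf e (A, det A)) has_derivative (\<lambda>H. gradF A \<bullet> H)) (at A)"
proof -
  have eq: "(\<lambda>A. e / 2 * (norm A)\<^sup>2 + Gf e (A, det A)) =
    (\<lambda>A. dl / 2 * (A \<bullet> A) + (bA \<bullet> A + bt * det A) + (\<Sum>j\<in>{1..5}. cc * Hf 0 (uu j A)))"
    by (simp add: fun_eq_iff Gf_def Lf_def uu_def power2_norm_eq_inner algebra_simps) (simp add: field_simps)
  have du: "((\<lambda>A. uu j A) has_derivative (\<lambda>H. wA j \<bullet> H + wt j * (cofm A \<bullet> H))) (at A)" for j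
  proof -
    have "((\<lambda>A. wA j \<bullet> A + wt j * det A - tt j) has_derivative (\<lambda>H. (wA j \<bullet> H + wt j * (cofm A \<bullet> H)) - 0)) (at A)"
      by (intro has_derivative_diff has_derivative_add has_derivative_mult_right det_deriv
        has_derivative_const bounded_linear_imp_has_derivative bounded_linear_inner_right)
    then show ?thesis unfolding uu_def by simp
  qed
  have dq: "((\<lambda>x. x \<bullet> x) has_derivative (\<lambda>H. H \<bullet> A + A \<bullet> H)) (at A)"
    by (rule has_derivative_eq_rhs[OF has_derivative_inner[OF has_derivative_ident has_derivative_ident]])
       (simp add: fun_eq_iff inner_commute)
  have d: "((\<lambda>A. dl / 2 * (A \<bullet> A) + (bA \<bullet> A + bt * det A) + (\<Sum>j\<in>{1..5}. cc * Hf 0 (uu j A)))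
     has_derivative (\<lambda>H. dl / 2 * (H \<bullet> A + A \<bullet> H) + (bA \<bullet> H + bt * (cofm A \<bullet> H))
        + (\<Sum>j\<in>{1..5}. cc * (Hf (Suc 0) (uu j A) * (wA j \<bullet> H + wt j * (cofm A \<bullet> H)))))) (at A)"
    by (intro has_derivative_add has_derivative_mult_right dq
        bounded_linear_imp_has_derivative bounded_linear_inner_right det_deriv has_derivative_sum
        Hf_comp du)
  show ?thesis unfolding eq
    by (rule has_derivative_eq_rhs[OF d])
       (simp add: fun_eq_iff gradF_def inner_add_left inner_scaleR_left inner_sum_left
         inner_commute[of _ A] algebra_simps sum_distrib_left)
qed

lemma DF_F: "DF (\<lambda>A. e / 2 * (norm A)\<^sup>2 + Gf e (A, det A)) A = gradF A"
  by (rule DF_eq[OF F_deriv])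

lemma sum5: "(\<Sum>j\<in>{1..5::nat}. f j) = f 1 + f 2 + f 3 + f 4 + f 5"
proof -
  have "{1..5::nat} = {1,2,3,4,5}" by auto
  then show ?thesis by (simp add: algebra_simps)
qed

lemma grad_i:
  assumes "i \<in> {1..5::nat}"
  shows "gradF (A0 i) ** Jmat = B0 i"
proof -
  have "i = 1 \<or> i = 2 \<or> i = 3 \<or> i = 4 \<or> i = 5" using assms by auto
  then show ?thesis
    unfolding gradF_def sum5 uu_def
    by (elim disjE)
       (simp_all add: A0_def B0_def wA_def wt_def tt_def bA_def bt_def dl_def
         Jmat_def Hf_nonpos cc_Hf1 mat2_eq_iff)
qed

theorem proposition2p3:
  shows "\<exists>\<epsilon>0::real. \<epsilon>0 > 0 \<and>
    (\<forall>\<epsilon>. 0 < \<epsilon> \<and> \<epsilon> < \<epsilon>0 \<longrightarrow>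
      (\<exists>G :: (real^2^2) \<times> real \<Rightarrow> real.
         smooth G \<and> convex_on UNIV G \<and>
         (\<forall>j\<in>{1..5::nat}.
            X0 j \<in> KF (\<lambda>A. \<epsilon> / 2 * (norm A)\<^sup>2 + G (A, det A)))))"
proof (intro exI[of _ dl] conjI allI impI)
  show "dl > 0" by (simp add: dl_def)
next
  fix \<epsilon> :: real assume e: "0 < \<epsilon> \<and> \<epsilon> < dl"
  show "\<exists>G :: (real^2^2) \<times> real \<Rightarrow> real.
         smooth G \<and> convex_on UNIV G \<and>
         (\<forall>j\<in>{1..5::nat}.
            X0 j \<in> KF (\<lambda>A. \<epsilon> / 2 * (norm A)\<^sup>2 + G (A, det A)))"
  proof (intro exI[of _ "Gf \<epsilon>"] conjI ballI)
    show "smooth (Gf \<epsilon>)" by (rule SM_smooth[OF SM_Gf])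
    show "convex_on UNIV (Gf \<epsilon>)" using e by (intro convex_Gf) simp
  next
    fix j :: nat assume j: "j \<in> {1..5}"
    have "stack (A0 j) (B0 j) = stack (A0 j) (DF (\<lambda>A. \<epsilon> / 2 * (norm A)\<^sup>2 + Gf \<epsilon> (A, det A)) (A0 j) ** Jmat)"
      by (simp only: DF_F grad_i[OF j])
    then show "X0 j \<in> KF (\<lambda>A. \<epsilon> / 2 * (norm A)\<^sup>2 + Gf \<epsilon> (A, det A))"
      unfolding KF_def X0_def by blast
  qed
qed


end
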